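(* There are absolute constants $c, c' > 0$ such that for all $d \geq 2$, $n \geq 1$ and $s \geq 1$ the following holds: if there is an $LK_d(MOD_p)$-refutation of size $s$ of the set $\neg PHP_n$, then Prover has a winning strategy for the game $G(d + c, n, c' \log s)$. (In the paper's notation: Prover has a winning strategy for $G(d+O(1), n, O(\log s))$.)
   Context: Fix a prime $p$. Formulas are built from propositional variables using the connectives $\neg$, unbounded-arity $\bigvee$, and unbounded-arity connectives $MOD_{p,i}$, $i=0,\dots,p-1$, where $MOD_{p,i}(y_1,\dots,y_k)$ means $\sum_j y_j \equiv i \pmod p$ (there is no $\bigwedge$; conjunctions are expressed via $\neg,\bigvee$). The depth of a formula is the maximal number of alternations of connectives along a path; the size of a formula or proof is its total number of symbols. $LK(MOD_p)$ is the sequent calculus with initial sequents $\varphi \to \varphi$, the structural rules (weakening, contraction, exchange), cut, left and right $\neg$-introduction, the rule $\bigvee$:left (from $\varphi_i,\Gamma\to\Delta$ for all $i\le t$ infer $\bigvee_{i\le t}\varphi_i,\Gamma\to\Delta$), the rule $\bigvee$:right (from $\Gamma\to\Delta,\varphi_j$ infer $\Gamma\to\Delta,\bigvee_{i\le t}\varphi_i$, any $j\le t$), and the $MOD_p$-axioms: $MOD_{p,0}(\emptyset)$; $\neg MOD_{p,i}(\emptyset)$ for $i=1,\dots,p-1$; and $MOD_{p,i}(\Gamma,\phi)\equiv[(MOD_{p,i}(\Gamma)\wedge\neg\phi)\vee(MOD_{p,i-1}(\Gamma)\wedge\phi)]$ for $i=0,\dots,p-1$ ($i-1$ taken mod $p$,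 $\Gamma$ a possibly empty sequence of formulas). $LK_d(MOD_p)$ is the subsystem in which all formulas have depth at most $d$. A refutation of a set of formulas $\Sigma$ is a derivation of the empty sequent in which the sequents $\to \psi$, $\psi\in\Sigma$, may be used as additional initial sequents. $\neg PHP_n$ is the set of formulas in variables $p_{ij}$, $i\in[n+1]$, $j\in[n]$: $\bigvee_{j\in[n]}p_{ij}$ for each $i\in[n+1]$; $\neg p_{i_1 j}\vee\neg p_{i_2 j}$ for all $i_1\neq i_2\in[n+1]$, $j\in[n]$; $\neg p_{ij_1}\vee\neg p_{ij_2}$ for all $i\in[n+1]$, $j_1\ne j_2\in[n]$. The game $G(d,n,t)$ is played by Prover and Liar for $t$ rounds. In each round Prover asks one question: (P1) the truth value of a formula $\varphi$; or (P2) if Liar already gave a truth value to $\varphi=\bigvee_{i\le u}\varphi_i$: (a) if he said false, Prover may ask the truth value of some one $\varphi_j$, $j\le u$; (b) if he said true, Prover may request a witness, i.e. a $j\le u$ with $\varphi_j$ stated true. All formulas asked are in the variables of $\neg PHP_n$, of depth at most $d$ and size at most $2^t$. Liar must obey: (L0) a formula asked again gets the same answer; (L1) $\varphi$ and $\neg\varphi$ get opposite values; (L2) in (P2a) he must answer false, in (P2b) he must give value true to some $\varphi_j$, $j\le u$; (L3) every $MOD_p$-axiom asked gets true; (L4) every formula of $\neg PHP_n$ asked gets true. Liar wins a play if he can answer all $t$ questions obeying the rules; otherwise Prover wins. A winning strategy for Prover is one winning against every Liar. *)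

theory Defs
  imports Complex_Main "HOL-Computational_Algebra.Primes"
begin

text \<open>Propositional variables are pairs of naturals; the PHP variable p_ij is Var (i,j).
  Mod i fs stands for MOD_{p,i}(fs) (the prime p is a separate parameter; well-formedness
  requires i < p).\<close>

datatype fm = Var "nat \<times> nat" | Neg fm | Disj "fm list" | Mod nat "fm list"

datatype conn = CNeg | COr | CMod nat

text \<open>Alternation depth: a maximal block of the same connective along a path counts once.
  dp c f is the depth of f below a parent connective c.\<close>

fun dp :: "conn option \<Rightarrow> fm \<Rightarrow> nat" where
  "dp c (Var v) = 0"
| "dp c (Neg f) = (if c = Some CNeg then 0 else 1) + dp (Some CNeg) f"
| "dp c (Disj fs) = (if c = Some COr then 0 else 1) + foldr max (map (dp (Some COr)) fs) 0"
| "dp c (Mod i fs) = (if c = Some (CMod i) then 0 else 1) + foldr max (map (dp (Some (CMod i))) fs) 0"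

definition depth :: "fm \<Rightarrow> nat" where
  "depth f = dp None f"

fun fsize :: "fm \<Rightarrow> nat" where
  "fsize (Var v) = 1"
| "fsize (Neg f) = 1 + fsize f"
| "fsize (Disj fs) = 1 + sum_list (map fsize fs)"
| "fsize (Mod i fs) = 1 + sum_list (map fsize fs)"

fun fvars :: "fm \<Rightarrow> (nat \<times> nat) set" where
  "fvars (Var v) = {v}"
| "fvars (Neg f) = fvars f"
| "fvars (Disj fs) = \<Union> (set (map fvars fs))"
| "fvars (Mod i fs) = \<Union> (set (map fvars fs))"

fun wf :: "nat \<Rightarrow> fm \<Rightarrow> bool" where
  "wf p (Var v) = True"
| "wf p (Neg f) = wf p f"
| "wf p (Disj fs) = (\<forall>f\<in>set fs. wf p f)"
| "wf p (Mod i fs) = (i < p \<and> (\<forall>f\<in>set fs. wf p f))"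

definition Conj2 :: "fm \<Rightarrow> fm \<Rightarrow> fm" where
  "Conj2 a b = Neg (Disj [Neg a, Neg b])"

definition Iff :: "fm \<Rightarrow> fm \<Rightarrow> fm" where
  "Iff a b = Conj2 (Disj [Neg a, b]) (Disj [Neg b, a])"

definition mod_axiom :: "nat \<Rightarrow> fm \<Rightarrow> bool" where
  "mod_axiom p \<psi> \<longleftrightarrow>
     \<psi> = Mod 0 []
   \<or> (\<exists>i. 1 \<le> i \<and> i < p \<and> \<psi> = Neg (Mod i []))
   \<or> (\<exists>i \<Gamma> \<phi>. i < p \<and>
        \<psi> = Iff (Mod i (\<Gamma> @ [\<phi>]))
                (Disj [Conj2 (Mod i \<Gamma>) (Neg \<phi>), Conj2 (Mod ((i + p - 1) mod p) \<Gamma>) \<phi>]))"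

definition php_vars :: "nat \<Rightarrow> (nat \<times> nat) set" where
  "php_vars n = {1..n+1} \<times> {1..n}"

definition negPHP :: "nat \<Rightarrow> fm set" where
  "negPHP n =
     {Disj (map (\<lambda>j. Var (i, j)) [1..<n+1]) | i. i \<in> {1..n+1}}
   \<union> {Disj [Neg (Var (i1, j)), Neg (Var (i2, j))] | i1 i2 j.
        i1 \<in> {1..n+1} \<and> i2 \<in> {1..n+1} \<and> i1 \<noteq> i2 \<and> j \<in> {1..n}}
   \<union> {Disj [Neg (Var (i, j1)), Neg (Var (i, j2))] | i j1 j2.
        i \<in> {1..n+1} \<and> j1 \<in> {1..n} \<and> j2 \<in> {1..n} \<and> j1 \<noteq> j2}"

type_synonym sequent = "fm list \<times> fm list"

definition seq_size :: "sequent \<Rightarrow> nat" where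
  "seq_size S = 1 + sum_list (map fsize (fst S)) + sum_list (map fsize (snd S))"

definition seq_fms :: "sequent \<Rightarrow> fm set" where
  "seq_fms S = set (fst S) \<union> set (snd S)"

text \<open>Inference rules: premises (list) and conclusion. Principal formulas sit at the
  front of the antecedent and at the end of the succedent; exchange makes this general.\<close>

inductive lk_rule :: "sequent list \<Rightarrow> sequent \<Rightarrow> bool" where
  weakL: "lk_rule [(G, D)] (\<phi> # G, D)"
| weakR: "lk_rule [(G, D)] (G, D @ [\<phi>])"
| contrL: "lk_rule [(\<phi> # \<phi> # G, D)] (\<phi> # G, D)"
| contrR: "lk_rule [(G, D @ [\<phi>, \<phi>])] (G, D @ [\<phi>])"
| exchL: "lk_rule [(G1 @ a # b # G2, D)] (G1 @ b # a # G2, D)"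
| exchR: "lk_rule [(G, D1 @ a # b # D2)] (G, D1 @ b # a # D2)"
| cut: "lk_rule [(G, D @ [\<phi>]), (\<phi> # G, D)] (G, D)"
| negL: "lk_rule [(G, D @ [\<phi>])] (Neg \<phi> # G, D)"
| negR: "lk_rule [(\<phi> # G, D)] (G, D @ [Neg \<phi>])"
| disjL: "lk_rule (map (\<lambda>\<phi>. (\<phi> # G, D)) \<phi>s) (Disj \<phi>s # G, D)"
| disjR: "\<phi> \<in> set \<phi>s \<Longrightarrow> lk_rule [(G, D @ [\<phi>])] (G, D @ [Disj \<phi>s])"

definition initial_seq :: "nat \<Rightarrow> fm set \<Rightarrow> sequent \<Rightarrow> bool" where
  "initial_seq p \<Sigma> S \<longleftrightarrow>
     (\<exists>\<phi>. S = ([\<phi>], [\<phi>]))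
   \<or> (\<exists>\<psi>. mod_axiom p \<psi> \<and> S = ([], [\<psi>]))
   \<or> (\<exists>\<psi>\<in>\<Sigma>. S = ([], [\<psi>]))"

definition lk_refutation :: "nat \<Rightarrow> nat \<Rightarrow> fm set \<Rightarrow> sequent list \<Rightarrow> bool" where
  "lk_refutation p d \<Sigma> P \<longleftrightarrow>
     P \<noteq> [] \<and> last P = ([], []) \<and>
     (\<forall>k < length P. \<forall>\<phi> \<in> seq_fms (P ! k). wf p \<phi> \<and> depth \<phi> \<le> d) \<and>
     (\<forall>k < length P. initial_seq p \<Sigma> (P ! k) \<or>
        (\<exists>ps. set ps \<subseteq> set (take k P) \<and> lk_rule ps (P ! k)))"

definition proof_size :: "sequent list \<Rightarrow> nat" where
  "proof_size P = sum_list (map seq_size P)"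

datatype question = Q1 fm | Q2a fm nat | Q2b fm
datatype answer = Val bool | Wit nat

type_synonym history = "(question \<times> answer) list"

fun args :: "fm \<Rightarrow> fm list" where
  "args (Disj fs) = fs"
| "args _ = []"

fun stmt :: "question \<times> answer \<Rightarrow> (fm \<times> bool) set" where
  "stmt (Q1 \<phi>, Val b) = {(\<phi>, b)}"
| "stmt (Q2a \<phi> j, Val b) = {(args \<phi> ! j, b)}"
| "stmt (Q2b \<phi>, Wit j) = {(args \<phi> ! j, True)}"
| "stmt _ = {}"

definition stated :: "history \<Rightarrow> (fm \<times> bool) set" where
  "stated h = \<Union> (set (map stmt h))"

definition admissible :: "nat \<Rightarrow> nat \<Rightarrow> nat \<Rightarrow> nat \<Rightarrow> fm \<Rightarrow> bool" where
  "admissible p d n t \<phi> \<longleftrightarrow>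
     wf p \<phi> \<and> depth \<phi> \<le> d \<and> fsize \<phi> \<le> 2 ^ t \<and> fvars \<phi> \<subseteq> php_vars n"

definition q_legal :: "nat \<Rightarrow> nat \<Rightarrow> nat \<Rightarrow> nat \<Rightarrow> history \<Rightarrow> question \<Rightarrow> bool" where
  "q_legal p d n t h q \<longleftrightarrow>
     (case q of
        Q1 \<phi> \<Rightarrow> admissible p d n t \<phi>
      | Q2a \<phi> j \<Rightarrow> (\<exists>\<phi>s. \<phi> = Disj \<phi>s \<and> (\<phi>, False) \<in> stated h \<and> j < length \<phi>s
                       \<and> admissible p d n t (\<phi>s ! j))
      | Q2b \<phi> \<Rightarrow> (\<exists>\<phi>s. \<phi> = Disj \<phi>s \<and> (\<phi>, True) \<in> stated h))"

text \<open>Rules L0, L1, L3, L4 on the set of all truth values stated so far.\<close>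

definition liar_consistent :: "nat \<Rightarrow> nat \<Rightarrow> (fm \<times> bool) set \<Rightarrow> bool" where
  "liar_consistent p n S \<longleftrightarrow>
     (\<forall>\<phi>. \<not> ((\<phi>, True) \<in> S \<and> (\<phi>, False) \<in> S))
   \<and> (\<forall>\<phi> b b'. (\<phi>, b) \<in> S \<and> (Neg \<phi>, b') \<in> S \<longrightarrow> b' = (\<not> b))
   \<and> (\<forall>\<phi> b. (\<phi>, b) \<in> S \<and> mod_axiom p \<phi> \<longrightarrow> b)
   \<and> (\<forall>\<phi> b. (\<phi>, b) \<in> S \<and> \<phi> \<in> negPHP n \<longrightarrow> b)"

text \<open>Answer legality (L2 included: in P2a the answer is false, in P2b a witness index).\<close>

definition a_legal :: "nat \<Rightarrow> nat \<Rightarrow> history \<Rightarrow> question \<Rightarrow> answer \<Rightarrow> bool" where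
  "a_legal p n h q a \<longleftrightarrow>
     (case (q, a) of
        (Q1 \<phi>, Val b) \<Rightarrow> True
      | (Q2a \<phi> j, Val b) \<Rightarrow> b = False
      | (Q2b \<phi>, Wit j) \<Rightarrow> j < length (args \<phi>)
      | _ \<Rightarrow> False)
   \<and> liar_consistent p n (stated h \<union> stmt (q, a))"

type_synonym prover_strategy = "history \<Rightarrow> question"
type_synonym liar_strategy = "history \<Rightarrow> question \<Rightarrow> answer"

fun play :: "prover_strategy \<Rightarrow> liar_strategy \<Rightarrow> nat \<Rightarrow> history" where
  "play \<sigma> \<tau> 0 = []"
| "play \<sigma> \<tau> (Suc k) = play \<sigma> \<tau> k @ [(\<sigma> (play \<sigma> \<tau> k), \<tau> (play \<sigma> \<tau> k) (\<sigma> (play \<sigma> \<tau> k)))]"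

definition winning_strategy :: "nat \<Rightarrow> nat \<Rightarrow> nat \<Rightarrow> nat \<Rightarrow> prover_strategy \<Rightarrow> bool" where
  "winning_strategy p d n t \<sigma> \<longleftrightarrow>
     (\<forall>\<tau>. \<exists>k < t.
        (\<forall>m \<le> k. q_legal p d n t (play \<sigma> \<tau> m) (\<sigma> (play \<sigma> \<tau> m)))
      \<and> (\<forall>m < k. a_legal p n (play \<sigma> \<tau> m) (\<sigma> (play \<sigma> \<tau> m)) (\<tau> (play \<sigma> \<tau> m) (\<sigma> (play \<sigma> \<tau> m))))
      \<and> \<not> a_legal p n (play \<sigma> \<tau> k) (\<sigma> (play \<sigma> \<tau> k)) (\<tau> (play \<sigma> \<tau> k) (\<sigma> (play \<sigma> \<tau> k))))"

definition prover_wins :: "nat \<Rightarrow> nat \<Rightarrow> nat \<Rightarrow> nat \<Rightarrow> bool" where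
  "prover_wins p d n t \<longleftrightarrow> (\<exists>\<sigma>. winning_strategy p d n t \<sigma>)"

end

theory Submission
  imports Defs
begin


context fixes p D n t :: nat begin

definition qlegalS :: "(fm \<times> bool) set \<Rightarrow> question \<Rightarrow> bool" where
  "qlegalS S q \<longleftrightarrow>
     (case q of
        Q1 \<phi> \<Rightarrow> admissible p D n t \<phi>
      | Q2a \<phi> j \<Rightarrow> (\<exists>\<phi>s. \<phi> = Disj \<phi>s \<and> (\<phi>, False) \<in> S \<and> j < length \<phi>s
                       \<and> admissible p D n t (\<phi>s ! j))
      | Q2b \<phi> \<Rightarrow> (\<exists>\<phi>s. \<phi> = Disj \<phi>s \<and> (\<phi>, True) \<in> S))"

definition fmt :: "question \<Rightarrow> answer \<Rightarrow> bool" where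
  "fmt q a \<longleftrightarrow> (case (q, a) of
        (Q1 \<phi>, Val b) \<Rightarrow> True
      | (Q2a \<phi> j, Val b) \<Rightarrow> b = False
      | (Q2b \<phi>, Wit j) \<Rightarrow> j < length (args \<phi>)
      | _ \<Rightarrow> False)"

inductive E :: "nat \<Rightarrow> (fm \<times> bool) set \<Rightarrow> bool" where
  "qlegalS S q \<Longrightarrow> (\<And>a. fmt q a \<Longrightarrow> liar_consistent p n (S \<union> stmt (q, a)) \<Longrightarrow> E m (S \<union> stmt (q, a)))
   \<Longrightarrow> E (Suc m) S"

lemma q_legal_eq: "q_legal p D n t h q = qlegalS (stated h) q"
  unfolding q_legal_def qlegalS_def by simp

lemma a_legal_eq: "a_legal p n h q a = (fmt q a \<and> liar_consistent p n (stated h \<union> stmt (q, a)))"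
  unfolding a_legal_def fmt_def by simp

lemma stated_snoc: "stated (h @ [x]) = stated h \<union> stmt x"
  unfolding stated_def by auto

lemma stated_Nil: "stated [] = {}"
  unfolding stated_def by auto

lemma len_play: "length (play \<sigma> \<tau> k) = k"
  by (induction k) auto

lemma E_wins:
  assumes "E t {}"
  shows "prover_wins p D n t"
proof -
  define \<sigma> where "\<sigma> h = (SOME q. qlegalS (stated h) q \<and> (\<forall>a. fmt q a \<longrightarrow>
      liar_consistent p n (stated h \<union> stmt (q, a)) \<longrightarrow> E (t - length h - 1) (stated h \<union> stmt (q, a))))"
    for h
  have sp: "t - length h > 0 \<and> qlegalS (stated h) (\<sigma> h) \<and> (\<forall>a. fmt (\<sigma> h) a \<longrightarrow>
      liar_consistent p n (stated h \<union> stmt (\<sigma> h, a)) \<longrightarrow> E (t - length h - 1) (stated h \<union> stmt (\<sigma> h, a)))"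
    if "E (t - length h) (stated h)" for h
  proof -
    from that obtain m q where m: "t - length h = Suc m" and q: "qlegalS (stated h) q"
      and r: "\<forall>a. fmt q a \<longrightarrow> liar_consistent p n (stated h \<union> stmt (q, a)) \<longrightarrow> E m (stated h \<union> stmt (q, a))"
      by (cases rule: E.cases) blast
    have "\<exists>q. qlegalS (stated h) q \<and> (\<forall>a. fmt q a \<longrightarrow>
      liar_consistent p n (stated h \<union> stmt (q, a)) \<longrightarrow> E (t - length h - 1) (stated h \<union> stmt (q, a)))"
      using q r m by auto
    from someI_ex[OF this] m show ?thesis unfolding \<sigma>_def by auto
  qed
  show ?thesis unfolding prover_wins_def winning_strategy_def
  proof (rule exI[of _ \<sigma>], intro allI)
    fix \<tau>
    let ?h = "play \<sigma> \<tau>"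
    let ?al = "\<lambda>m. a_legal p n (?h m) (\<sigma> (?h m)) (\<tau> (?h m) (\<sigma> (?h m)))"
    have G: "(\<forall>m<k. ?al m) \<Longrightarrow> E (t - k) (stated (?h k))" for k
    proof (induction k)
      case 0 then show ?case using assms by (simp add: stated_Nil)
    next
      case (Suc k)
      then have "E (t - k) (stated (?h k))" by auto
      then have s: "t - length (?h k) > 0 \<and> qlegalS (stated (?h k)) (\<sigma> (?h k)) \<and> (\<forall>a. fmt (\<sigma> (?h k)) a \<longrightarrow>
      liar_consistent p n (stated (?h k) \<union> stmt (\<sigma> (?h k), a)) \<longrightarrow> E (t - length (?h k) - 1) (stated (?h k) \<union> stmt (\<sigma> (?h k), a)))"
        using sp len_play by metis
      have "?al k" using Suc.prems by auto
      then show ?case using s by (simp add: a_legal_eq stated_snoc len_play)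
    qed
    have Ek: "(\<forall>m<k. ?al m) \<Longrightarrow> k < t" for k
    proof -
      assume "\<forall>m<k. ?al m"
      then have "E (t - k) (stated (?h k))" by (rule G)
      then show "k < t" by (cases rule: E.cases) auto
    qed
    have "\<exists>k. \<not> ?al k" using Ek[of t] by auto
    then obtain k where k: "\<not> ?al k" "\<forall>m<k. ?al m"
      using exists_least_iff[of "\<lambda>k. \<not> ?al k"] by blast
    have ql: "\<forall>m\<le>k. q_legal p D n t (?h m) (\<sigma> (?h m))"
    proof (intro allI impI)
      fix m assume "m \<le> k"
      then have "E (t - m) (stated (?h m))" using G k(2) by auto
      then have "qlegalS (stated (?h m)) (\<sigma> (?h m))" using sp[of "?h m"] len_play by metis
      then show "q_legal p D n t (?h m) (\<sigma> (?h m))" unfolding q_legal_eq .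

    qed
    show "\<exists>k<t. (\<forall>m\<le>k. q_legal p D n t (?h m) (\<sigma> (?h m))) \<and> (\<forall>m<k. ?al m) \<and> \<not> ?al k"
    proof -
      have "k < t" using Ek k(2) by blast
      then show ?thesis using k ql by blast
    qed
  qed
qed

end


abbreviation cons where "cons p n S \<equiv> liar_consistent p n S"

lemma cons_anti: "liar_consistent p n S' \<Longrightarrow> S \<subseteq> S' \<Longrightarrow> liar_consistent p n S"
proof -
  assume a: "liar_consistent p n S'" "S \<subseteq> S'"
  show ?thesis unfolding liar_consistent_def
  proof (intro conjI allI impI)
    fix \<phi> show "\<not> ((\<phi>, True) \<in> S \<and> (\<phi>, False) \<in> S)" using a unfolding liar_consistent_def by auto
  next
    fix \<phi> b b' assume "(\<phi>, b) \<in> S \<and> (Neg \<phi>, b') \<in> S" then show "b' = (\<not> b)" using a unfolding liar_consistent_def by (metis (full_types) subsetD)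
  next
    fix \<phi> b assume "(\<phi>, b) \<in> S \<and> mod_axiom p \<phi>" then show "b" using a unfolding liar_consistent_def by (metis (full_types) subsetD)
  next
    fix \<phi> b assume "(\<phi>, b) \<in> S \<and> \<phi> \<in> negPHP n" then show "b" using a unfolding liar_consistent_def by (metis (full_types) subsetD)
  qed
qed

lemma cons_TF: "(\<phi>, True) \<in> S \<Longrightarrow> (\<phi>, False) \<in> S \<Longrightarrow> \<not> liar_consistent p n S"
  unfolding liar_consistent_def by blast

lemma cons_neg: "(\<phi>, b) \<in> S \<Longrightarrow> (Neg \<phi>, b) \<in> S \<Longrightarrow> \<not> liar_consistent p n S"
  unfolding liar_consistent_def by blast

lemma cons_mod: "(\<phi>, False) \<in> S \<Longrightarrow> mod_axiom p \<phi> \<Longrightarrow> \<not> liar_consistent p n S"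
  unfolding liar_consistent_def by blast

lemma cons_php: "(\<phi>, False) \<in> S \<Longrightarrow> \<phi> \<in> negPHP n \<Longrightarrow> \<not> liar_consistent p n S"
  unfolding liar_consistent_def by blast

lemma qlegal_mono: "qlegalS p D n t S q \<Longrightarrow> S \<subseteq> S' \<Longrightarrow> qlegalS p D n t S' q"
  unfolding qlegalS_def by (auto split: question.splits)

lemma E_mono: "E p D n t m S \<Longrightarrow> S \<subseteq> S' \<Longrightarrow> m \<le> m' \<Longrightarrow> E p D n t m' S'"
proof (induction m S arbitrary: S' m' rule: E.induct)
  case (1 S q m)
  then obtain m'' where m': "m' = Suc m''" "m \<le> m''" by (cases m') auto
  show ?case unfolding m'(1)
  proof (rule E.intros)
    show "qlegalS p D n t S' q" using qlegal_mono[OF 1(1) 1(4)] .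
    fix a assume a: "fmt q a" "liar_consistent p n (S' \<union> stmt (q, a))"
    have "S \<union> stmt (q, a) \<subseteq> S' \<union> stmt (q, a)" using 1(4) by auto
    then have c: "liar_consistent p n (S \<union> stmt (q, a))" using cons_anti[OF a(2)] by blast
    show "E p D n t m'' (S' \<union> stmt (q, a))" using 1(3)[OF a(1) c, of "S' \<union> stmt (q, a)" m''] 1(4) m'(2) by auto
  qed
qed

lemma E_Q1:
  assumes "admissible p D n t \<phi>"
    and "\<And>b. liar_consistent p n (S \<union> {(\<phi>, b)}) \<Longrightarrow> E p D n t m (S \<union> {(\<phi>, b)})"
  shows "E p D n t (Suc m) S"
proof (rule E.intros[where q="Q1 \<phi>"])
  show "qlegalS p D n t S (Q1 \<phi>)" using assms(1) unfolding qlegalS_def by simp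
  fix a assume "fmt (Q1 \<phi>) a" "liar_consistent p n (S \<union> stmt (Q1 \<phi>, a))"
  then show "E p D n t m (S \<union> stmt (Q1 \<phi>, a))" using assms(2)
    unfolding fmt_def by (cases a) auto
qed

lemma E_Q2a:
  assumes "(Disj \<phi>s, False) \<in> S" "j < length \<phi>s" "admissible p D n t (\<phi>s ! j)"
    and "liar_consistent p n (S \<union> {(\<phi>s ! j, False)}) \<Longrightarrow> E p D n t m (S \<union> {(\<phi>s ! j, False)})"
  shows "E p D n t (Suc m) S"
proof (rule E.intros[where q="Q2a (Disj \<phi>s) j"])
  show "qlegalS p D n t S (Q2a (Disj \<phi>s) j)" using assms(1-3) unfolding qlegalS_def by simp
  fix a assume "fmt (Q2a (Disj \<phi>s) j) a" "liar_consistent p n (S \<union> stmt (Q2a (Disj \<phi>s) j, a))"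
  then show "E p D n t m (S \<union> stmt (Q2a (Disj \<phi>s) j, a))" using assms(4)
    unfolding fmt_def by (cases a) auto
qed

lemma E_Q2b:
  assumes "(Disj \<phi>s, True) \<in> S"
    and "\<And>j. j < length \<phi>s \<Longrightarrow> liar_consistent p n (S \<union> {(\<phi>s ! j, True)}) \<Longrightarrow> E p D n t m (S \<union> {(\<phi>s ! j, True)})"
  shows "E p D n t (Suc m) S"
proof (rule E.intros[where q="Q2b (Disj \<phi>s)"])
  show "qlegalS p D n t S (Q2b (Disj \<phi>s))" using assms(1) unfolding qlegalS_def by simp
  fix a assume "fmt (Q2b (Disj \<phi>s)) a" "liar_consistent p n (S \<union> stmt (Q2b (Disj \<phi>s), a))"
  then show "E p D n t m (S \<union> stmt (Q2b (Disj \<phi>s), a))" using assms(2)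
    unfolding fmt_def by (cases a) auto
qed



lemma dp_le_depth: "dp c f \<le> depth f"
  unfolding depth_def by (cases f) auto

lemma depth_le_dp: "depth f \<le> Suc (dp c f)"
  unfolding depth_def by (cases f) auto

lemma foldr_max_le: "(\<forall>x\<in>set xs. x \<le> k) \<Longrightarrow> foldr max xs (0::nat) \<le> k"
  by (induction xs) auto

lemma foldr_max_ge: "x \<in> set xs \<Longrightarrow> x \<le> foldr max xs (0::nat)"
  by (induction xs) auto

lemma depth_Neg_sub: "depth \<phi> \<le> depth (Neg \<phi>)"
  using depth_le_dp[of \<phi> "Some CNeg"] by (simp add: depth_def)

lemma depth_Disj_sub: "\<phi> \<in> set \<phi>s \<Longrightarrow> depth \<phi> \<le> depth (Disj \<phi>s)"
proof -
  assume "\<phi> \<in> set \<phi>s"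
  then have "dp (Some COr) \<phi> \<le> foldr max (map (dp (Some COr)) \<phi>s) 0"
    by (intro foldr_max_ge) auto
  then show ?thesis using depth_le_dp[of \<phi> "Some COr"] by (simp add: depth_def)
qed

lemma depth_Neg_le: "depth (Neg \<phi>) \<le> Suc (depth \<phi>)"
  using dp_le_depth[of "Some CNeg" \<phi>] by (simp add: depth_def)

lemma depth_Disj_le: "(\<forall>f\<in>set fs. depth f \<le> k) \<Longrightarrow> depth (Disj fs) \<le> Suc k"
proof -
  assume a: "\<forall>f\<in>set fs. depth f \<le> k"
  have "foldr max (map (dp (Some COr)) fs) 0 \<le> k"
    using a dp_le_depth[of "Some COr"] by (intro foldr_max_le) (auto intro: order_trans)
  then show ?thesis by (simp add: depth_def)
qed

lemma adm_Neg: "admissible p D n t (Neg \<phi>) \<Longrightarrow> admissible p D n t \<phi>"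
  unfolding admissible_def using depth_Neg_sub[of \<phi>] by auto

lemma adm_Disj: "admissible p D n t (Disj \<phi>s) \<Longrightarrow> \<phi> \<in> set \<phi>s \<Longrightarrow> admissible p D n t \<phi>"
  unfolding admissible_def using depth_Disj_sub[of \<phi> \<phi>s] member_le_sum_list[of "fsize \<phi>" "map fsize \<phi>s"]
  by auto

lemma adm_Disj_nth: "admissible p D n t (Disj \<phi>s) \<Longrightarrow> j < length \<phi>s \<Longrightarrow> admissible p D n t (\<phi>s ! j)"
  using adm_Disj by (meson nth_mem)

section \<open>Substitution of variables\<close>

fun sv :: "(nat \<times> nat) set \<Rightarrow> fm \<Rightarrow> fm" where
  "sv V (Var v) = (if v \<in> V then Var v else Var (1, 1))"
| "sv V (Neg f) = Neg (sv V f)"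
| "sv V (Disj fs) = Disj (map (sv V) fs)"
| "sv V (Mod i fs) = Mod i (map (sv V) fs)"

lemma sv_dp: "dp c (sv V f) = dp c f"
proof (induction f arbitrary: c)
  case (Disj fs) then show ?case by (simp add: comp_def cong: map_cong)
next
  case (Mod i fs) then show ?case by (simp add: comp_def cong: map_cong)
qed auto

lemma sv_depth: "depth (sv V f) = depth f"
  by (simp add: depth_def sv_dp)

lemma sv_fsize: "fsize (sv V f) = fsize f"
proof (induction f)
  case (Disj fs) then show ?case by (simp add: comp_def cong: map_cong)
next
  case (Mod i fs) then show ?case by (simp add: comp_def cong: map_cong)
qed auto

lemma sv_wf: "wf p (sv V f) = wf p f"
  by (induction f) auto

lemma sv_fvars: "fvars (sv V f) \<subseteq> V \<union> {(1,1)}"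
  by (induction f) auto

lemma sv_id: "fvars f \<subseteq> V \<Longrightarrow> sv V f = f"
proof (induction f)
  case (Disj fs) then show ?case by (auto intro: map_idI)
next
  case (Mod i fs) then show ?case by (auto intro: map_idI)
qed auto

lemma sv_Conj2: "sv V (Conj2 a b) = Conj2 (sv V a) (sv V b)"
  by (simp add: Conj2_def)

lemma sv_Iff: "sv V (Iff a b) = Iff (sv V a) (sv V b)"
  by (simp add: Iff_def Conj2_def)

lemma sv_mod_axiom: "mod_axiom p \<psi> \<Longrightarrow> mod_axiom p (sv V \<psi>)"
  unfolding mod_axiom_def
proof (elim disjE exE conjE)
  fix i \<Gamma> \<phi> assume a: "i < p" "\<psi> = Iff (Mod i (\<Gamma> @ [\<phi>]))
                (Disj [Conj2 (Mod i \<Gamma>) (Neg \<phi>), Conj2 (Mod ((i + p - 1) mod p) \<Gamma>) \<phi>])"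
  have "sv V \<psi> = Iff (Mod i (map (sv V) \<Gamma> @ [sv V \<phi>]))
                (Disj [Conj2 (Mod i (map (sv V) \<Gamma>)) (Neg (sv V \<phi>)), Conj2 (Mod ((i + p - 1) mod p) (map (sv V) \<Gamma>)) (sv V \<phi>)])"
    using a(2) by (simp add: sv_Iff sv_Conj2)
  then show "sv V \<psi> = Mod 0 [] \<or> (\<exists>i\<ge>1. i < p \<and> sv V \<psi> = Neg (Mod i [])) \<or>
    (\<exists>i \<Gamma> \<phi>. i < p \<and> sv V \<psi> = Iff (Mod i (\<Gamma> @ [\<phi>])) (Disj [Conj2 (Mod i \<Gamma>) (Neg \<phi>), Conj2 (Mod ((i + p - 1) mod p) \<Gamma>) \<phi>]))"
    using a(1) by blast
qed auto

lemma negPHP_fvars: "\<psi> \<in> negPHP n \<Longrightarrow> fvars \<psi> \<subseteq> php_vars n"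
  unfolding negPHP_def php_vars_def by auto

definition ss :: "(nat \<times> nat) set \<Rightarrow> sequent \<Rightarrow> sequent" where
  "ss V S = (map (sv V) (fst S), map (sv V) (snd S))"

lemma ss_rule: "lk_rule ps S \<Longrightarrow> lk_rule (map (ss V) ps) (ss V S)"
proof (induction rule: lk_rule.induct)
  case (disjL G D \<phi>s)
  have "map (ss V) (map (\<lambda>\<phi>. (\<phi> # G, D)) \<phi>s) = map (\<lambda>\<phi>. (\<phi> # map (sv V) G, map (sv V) D)) (map (sv V) \<phi>s)"
    by (simp add: ss_def)
  moreover have "ss V (Disj \<phi>s # G, D) = (Disj (map (sv V) \<phi>s) # map (sv V) G, map (sv V) D)"
    by (simp add: ss_def)
  ultimately show ?case using lk_rule.disjL[of "map (sv V) G" "map (sv V) D" "map (sv V) \<phi>s"]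
    by metis
next
  case (disjR \<phi> \<phi>s G D)
  then show ?case using lk_rule.disjR[of "sv V \<phi>" "map (sv V) \<phi>s" "map (sv V) G" "map (sv V) D"]
    by (simp add: ss_def)
qed (simp_all add: ss_def lk_rule.intros)



definition L :: "sequent \<Rightarrow> fm list" where "L S = map Neg (fst S) @ snd S"
definition sf :: "sequent \<Rightarrow> fm" where "sf S = Disj (L S)"
definition C :: "sequent list \<Rightarrow> nat \<Rightarrow> fm" where
  "C P m = Disj (map (\<lambda>i. Neg (sf (P ! i))) [0..<m])"

locale G =
  fixes p D n t :: nat and P :: "sequent list"
  assumes ne: "P \<noteq> []" and lastP: "last P = ([], [])"
    and rules: "\<And>k. k < length P \<Longrightarrow> initial_seq p (negPHP n) (P ! k) \<or> (\<exists>ps. set ps \<subseteq> set (take k P) \<and> lk_rule ps (P ! k))"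
    and admC: "\<And>m. m \<le> length P \<Longrightarrow> admissible p D n t (C P m)"
begin

abbreviation "EE \<equiv> E p D n t"
abbreviation "adm \<equiv> admissible p D n t"
abbreviation "cs \<equiv> liar_consistent p n"

lemma C_nth: "i < m \<Longrightarrow> (map (\<lambda>i. Neg (sf (P ! i))) [0..<m]) ! i = Neg (sf (P ! i))"
  by simp

lemma adm_nsf: "i < length P \<Longrightarrow> adm (Neg (sf (P ! i)))"
  using admC[of "length P"] adm_Disj[of p D n t "map (\<lambda>i. Neg (sf (P ! i))) [0..<length P]"]
  unfolding C_def by auto

lemma adm_sf: "i < length P \<Longrightarrow> adm (sf (P ! i))"
  using adm_nsf adm_Neg by blast

lemma adm_L: "i < length P \<Longrightarrow> e \<in> set (L (P ! i)) \<Longrightarrow> adm e"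
  using adm_sf adm_Disj unfolding sf_def by blast

lemma adm_Lnth: "i < length P \<Longrightarrow> j < length (L (P ! i)) \<Longrightarrow> adm (L (P ! i) ! j)"
  using adm_L nth_mem by blast

lemma in_take: "x \<in> set (take a P) \<Longrightarrow> \<exists>i<a. i < length P \<and> P ! i = x"
  by (auto simp: in_set_conv_nth)

lemma usePrem:
  assumes ia: "i < a" and aN: "a < length P" and Ca: "(C P a, False) \<in> S"
    and sa: "(sf (P ! a), False) \<in> S"
    and el: "\<forall>e\<in>set (L (P ! i)). e \<in> set (L (P ! a)) \<or> \<not> cs (S \<union> {(e, True)})"
  shows "EE 4 S"
proof -
  have iN: "i < length P" using ia aN by auto
  let ?S1 = "S \<union> {(Neg (sf (P ! i)), False)}"
  have "EE (Suc (Suc (Suc (Suc 0)))) S"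
  proof (rule E_Q2a[where \<phi>s="map (\<lambda>i. Neg (sf (P ! i))) [0..<a]" and j=i])
    show "(Disj (map (\<lambda>i. Neg (sf (P ! i))) [0..<a]), False) \<in> S" using Ca unfolding C_def .
    show "i < length (map (\<lambda>i. Neg (sf (P ! i))) [0..<a])" using ia by simp
    show "adm (map (\<lambda>i. Neg (sf (P ! i))) [0..<a] ! i)" using ia adm_nsf iN by simp
    assume c1: "cs (S \<union> {(map (\<lambda>i. Neg (sf (P ! i))) [0..<a] ! i, False)})"
    have S1: "S \<union> {(map (\<lambda>i. Neg (sf (P ! i))) [0..<a] ! i, False)} = ?S1" using ia by simp
    show "EE (Suc (Suc (Suc 0))) (S \<union> {(map (\<lambda>i. Neg (sf (P ! i))) [0..<a] ! i, False)})" unfolding S1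
    proof (rule E_Q1[where \<phi>="sf (P ! i)"])
      show "adm (sf (P ! i))" using adm_sf iN .
      fix b assume c2: "cs (?S1 \<union> {(sf (P ! i), b)})"
      have b: "b = True"
      proof (rule ccontr)
        assume "b \<noteq> True"
        then have "b = False" by simp
        then show False using c2 cons_neg[of "sf (P ! i)" False "?S1 \<union> {(sf (P ! i), b)}"] by auto
      qed
      let ?S2 = "?S1 \<union> {(sf (P ! i), b)}"
      show "EE (Suc (Suc 0)) ?S2"
      proof (rule E_Q2b[where \<phi>s="L (P ! i)"])
        show "(Disj (L (P ! i)), True) \<in> ?S2" using b by (simp add: sf_def)
        fix j assume j: "j < length (L (P ! i))" and c3: "cs (?S2 \<union> {(L (P ! i) ! j, True)})"
        let ?e = "L (P ! i) ! j"
        have "?e \<in> set (L (P ! i))" using j by simp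
        then have "?e \<in> set (L (P ! a)) \<or> \<not> cs (S \<union> {(?e, True)})" using el by blast
        moreover have "cs (S \<union> {(?e, True)})"
          using c3 by (rule cons_anti) auto
        ultimately have "?e \<in> set (L (P ! a))" by blast
        then obtain j' where j': "j' < length (L (P ! a))" "L (P ! a) ! j' = ?e"
          by (auto simp: in_set_conv_nth)
        show "EE (Suc 0) (?S2 \<union> {(?e, True)})"
        proof (rule E_Q2a[where \<phi>s="L (P ! a)" and j=j'])
          show "(Disj (L (P ! a)), False) \<in> ?S2 \<union> {(?e, True)}" using sa by (simp add: sf_def)
          show "j' < length (L (P ! a))" by fact
          show "adm (L (P ! a) ! j')" using adm_Lnth aN j'(1) .
          assume "cs (?S2 \<union> {(?e, True)} \<union> {(L (P ! a) ! j', False)})"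
          moreover have "\<not> cs (?S2 \<union> {(?e, True)} \<union> {(L (P ! a) ! j', False)})"
            using j'(2) by (intro cons_TF[of ?e]) auto
          ultimately show "EE 0 (?S2 \<union> {(?e, True)} \<union> {(L (P ! a) ! j', False)})" by blast
        qed
      qed
    qed
  qed
  then show ?thesis by (simp add: eval_nat_numeral)
qed

end


context G begin

lemma Emono: "EE m S \<Longrightarrow> m \<le> m' \<Longrightarrow> S \<subseteq> S' \<Longrightarrow> EE m' S'"
  using E_mono by blast

lemma prem:
  assumes "Q \<in> set ps" "set ps \<subseteq> set (take a P)" "a < length P" "(C P a, False) \<in> S"
    "(sf (P ! a), False) \<in> S"
    "\<forall>e\<in>set (L Q). e \<in> set (L (P ! a)) \<or> \<not> cs (S \<union> {(e, True)})"
  shows "EE 4 S"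
proof -
  obtain i where "i < a" "P ! i = Q" using assms(1,2) in_take by blast
  then show ?thesis using usePrem[of i a S] assms by auto
qed

lemma L_simp: "L (Gs, Ds) = map Neg Gs @ Ds" by (simp add: L_def)

lemma ruleStep:
  assumes aN: "a < length P" and Ca: "(C P a, False) \<in> S" and sa: "(sf (P ! a), False) \<in> S"
  shows "EE 7 S"
proof -
  have sa': "(Disj (L (P ! a)), False) \<in> S" using sa by (simp add: sf_def)
  have admLa: "\<And>j. j < length (L (P ! a)) \<Longrightarrow> adm (L (P ! a) ! j)" using adm_Lnth aN by blast
  from rules[OF aN] show ?thesis
  proof (elim disjE exE conjE)
    assume "initial_seq p (negPHP n) (P ! a)"
    then show ?thesis unfolding initial_seq_def
    proof (elim disjE exE conjE bexE)
      fix \<phi> assume Pa: "P ! a = ([\<phi>], [\<phi>])"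
      have LPa: "L (P ! a) = [Neg \<phi>, \<phi>]" using Pa by (simp add: L_def)
      have "EE (Suc (Suc 0)) S"
      proof (rule E_Q2a[OF sa', of 0])
        show "0 < length (L (P ! a))" "adm (L (P ! a) ! 0)" using admLa[of 0] admLa[of 1] LPa by auto
        assume "cs (S \<union> {(L (P ! a) ! 0, False)})"
        show "EE (Suc 0) (S \<union> {(L (P ! a) ! 0, False)})"
        proof (rule E_Q2a[of "L (P ! a)" _ 1])
          show "(Disj (L (P ! a)), False) \<in> S \<union> {(L (P ! a) ! 0, False)}" using sa' by simp
          show "1 < length (L (P ! a))" "adm (L (P ! a) ! 1)" using admLa[of 0] admLa[of 1] LPa by auto
          assume "cs (S \<union> {(L (P ! a) ! 0, False)} \<union> {(L (P ! a) ! 1, False)})"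
          moreover have "\<not> cs (S \<union> {(L (P ! a) ! 0, False)} \<union> {(L (P ! a) ! 1, False)})"
            using LPa by (intro cons_neg[of \<phi> False]) auto
          ultimately show "EE 0 (S \<union> {(L (P ! a) ! 0, False)} \<union> {(L (P ! a) ! 1, False)})" by blast
        qed
      qed
      then show ?thesis by (rule Emono) auto
    next
      fix \<psi> assume ax: "mod_axiom p \<psi>" and Pa: "P ! a = ([], [\<psi>])"
      have LPa: "L (P ! a) = [\<psi>]" using Pa by (simp add: L_def)
      have "EE (Suc 0) S"
      proof (rule E_Q2a[OF sa', of 0])
        show "0 < length (L (P ! a))" "adm (L (P ! a) ! 0)" using admLa[of 0] admLa[of 1] LPa by auto
        assume "cs (S \<union> {(L (P ! a) ! 0, False)})"
        moreover have "\<not> cs (S \<union> {(L (P ! a) ! 0, False)})"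
          using LPa ax by (intro cons_mod[of \<psi>]) auto
        ultimately show "EE 0 (S \<union> {(L (P ! a) ! 0, False)})" by blast
      qed
      then show ?thesis by (rule Emono) auto
    next
      fix \<psi> assume ax: "\<psi> \<in> negPHP n" and Pa: "P ! a = ([], [\<psi>])"
      have LPa: "L (P ! a) = [\<psi>]" using Pa by (simp add: L_def)
      have "EE (Suc 0) S"
      proof (rule E_Q2a[OF sa', of 0])
        show "0 < length (L (P ! a))" "adm (L (P ! a) ! 0)" using admLa[of 0] admLa[of 1] LPa by auto
        assume "cs (S \<union> {(L (P ! a) ! 0, False)})"
        moreover have "\<not> cs (S \<union> {(L (P ! a) ! 0, False)})"
          using LPa ax by (intro cons_php[of \<psi>]) auto
        ultimately show "EE 0 (S \<union> {(L (P ! a) ! 0, False)})" by blast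
      qed
      then show ?thesis by (rule Emono) auto
    qed
  next
    fix ps assume sub: "set ps \<subseteq> set (take a P)" and r: "lk_rule ps (P ! a)"
    from r show ?thesis
    proof (cases rule: lk_rule.cases)
      case (weakL Gs Ds \<phi>)
      then show ?thesis using prem[of "hd ps" ps a S] sub aN Ca sa by (auto simp: L_simp intro: Emono)
    next
      case (weakR Gs Ds \<phi>)
      then show ?thesis using prem[of "hd ps" ps a S] sub aN Ca sa by (auto simp: L_simp intro: Emono)
    next
      case (contrL \<phi> Gs Ds)
      then show ?thesis using prem[of "hd ps" ps a S] sub aN Ca sa by (auto simp: L_simp intro: Emono)
    next
      case (contrR Gs Ds \<phi>)
      then show ?thesis using prem[of "hd ps" ps a S] sub aN Ca sa by (auto simp: L_simp intro: Emono)
    next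
      case (exchL G1 x y G2 Ds)
      have "EE 4 S" by (rule prem[of "hd ps" ps a S]) (use exchL sub aN Ca sa in \<open>auto simp: L_simp\<close>)
      then show ?thesis by (rule Emono) auto
    next
      case (exchR Gs D1 x y D2)
      have "EE 4 S" by (rule prem[of "hd ps" ps a S]) (use exchR sub aN Ca sa in \<open>auto simp: L_simp\<close>)
      then show ?thesis by (rule Emono) auto
    next
      case (cut Gs Ds \<phi>)
      obtain i1 where i1: "i1 < a" "P ! i1 = (Gs, Ds @ [\<phi>])" using sub cut(1) in_take by force
      have admphi: "adm \<phi>" using adm_L[of i1 \<phi>] i1 aN by (simp add: L_simp)
      have "EE (Suc 4) S"
      proof (rule E_Q1[OF admphi])
        fix b assume "cs (S \<union> {(\<phi>, b)})"
        show "EE 4 (S \<union> {(\<phi>, b)})"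
        proof (cases b)
          case True
          show ?thesis
          proof (rule prem[of "(\<phi> # Gs, Ds)" ps a])
            show "\<forall>e\<in>set (L (\<phi> # Gs, Ds)). e \<in> set (L (P ! a)) \<or> \<not> cs (S \<union> {(\<phi>, b)} \<union> {(e, True)})"
            proof
              fix e assume "e \<in> set (L (\<phi> # Gs, Ds))"
              then have "e = Neg \<phi> \<or> e \<in> set (L (P ! a))" using cut by (auto simp: L_simp)
              then show "e \<in> set (L (P ! a)) \<or> \<not> cs (S \<union> {(\<phi>, b)} \<union> {(e, True)})"
                using True cons_neg[of \<phi> True "S \<union> {(\<phi>, b)} \<union> {(e, True)}"] by auto
            qed
          qed (use cut sub aN Ca sa in auto)
        next
          case False
          show ?thesis
          proof (rule prem[of "(Gs, Ds @ [\<phi>])" ps a])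
            show "\<forall>e\<in>set (L (Gs, Ds @ [\<phi>])). e \<in> set (L (P ! a)) \<or> \<not> cs (S \<union> {(\<phi>, b)} \<union> {(e, True)})"
            proof
              fix e assume "e \<in> set (L (Gs, Ds @ [\<phi>]))"
              then have "e = \<phi> \<or> e \<in> set (L (P ! a))" using cut by (auto simp: L_simp)
              then show "e \<in> set (L (P ! a)) \<or> \<not> cs (S \<union> {(\<phi>, b)} \<union> {(e, True)})"
                using False cons_TF[of \<phi> "S \<union> {(\<phi>, b)} \<union> {(e, True)}"] by auto
            qed
          qed (use cut sub aN Ca sa in auto)
        qed
      qed
      then show ?thesis by (rule Emono) auto
    next
      case (negL Gs Ds \<phi>)
      have L0: "L (P ! a) ! 0 = Neg (Neg \<phi>)" "0 < length (L (P ! a))" using negL by (auto simp: L_simp)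
      have a0: "adm (Neg (Neg \<phi>))" using admLa[OF L0(2)] L0(1) by simp
      have "EE (Suc (Suc (Suc 4))) S"
      proof (rule E_Q2a[OF sa' L0(2)])
        show "adm (L (P ! a) ! 0)" using admLa[OF L0(2)] .
        let ?S1 = "S \<union> {(L (P ! a) ! 0, False)}"
        show "EE (Suc (Suc 4)) ?S1"
        proof (rule E_Q1[where \<phi>="Neg \<phi>"])
          show "adm (Neg \<phi>)" using adm_Neg a0 by blast
          fix b assume c: "cs (?S1 \<union> {(Neg \<phi>, b)})"
          have b: b
          proof (rule ccontr)
            assume "\<not> b"
            then show False using c cons_neg[of "Neg \<phi>" False "?S1 \<union> {(Neg \<phi>, b)}"] L0 by auto
          qed
          let ?S2 = "?S1 \<union> {(Neg \<phi>, b)}"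
          show "EE (Suc 4) ?S2"
          proof (rule E_Q1[where \<phi>="\<phi>"])
            show "adm \<phi>" using adm_Neg a0 by blast
            fix b' assume c: "cs (?S2 \<union> {(\<phi>, b')})"
            have b': "\<not> b'"
            proof
              assume b': b'
              then show False using c cons_neg[of "\<phi>" True "?S2 \<union> {(\<phi>, b')}"] b by auto
            qed
            show "EE 4 (?S2 \<union> {(\<phi>, b')})"
            proof (rule prem[of "(Gs, Ds @ [\<phi>])" ps a])
              show "\<forall>e\<in>set (L (Gs, Ds @ [\<phi>])). e \<in> set (L (P ! a)) \<or> \<not> cs (?S2 \<union> {(\<phi>, b')} \<union> {(e, True)})"
              proof
                fix e assume "e \<in> set (L (Gs, Ds @ [\<phi>]))"
                then have "e = \<phi> \<or> e \<in> set (L (P ! a))" using negL by (auto simp: L_simp)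
                then show "e \<in> set (L (P ! a)) \<or> \<not> cs (?S2 \<union> {(\<phi>, b')} \<union> {(e, True)})"
                  using b' cons_TF[of \<phi> "?S2 \<union> {(\<phi>, b')} \<union> {(e, True)}"] by auto
              qed
            qed (use negL sub aN Ca sa in auto)
          qed
        qed
      qed
      then show ?thesis by (rule Emono) auto
    next
      case (negR \<phi> Gs Ds)
      define j where "j = length Gs + length Ds"
      have L0: "L (P ! a) ! j = Neg \<phi>" "j < length (L (P ! a))" using negR
        by (auto simp: L_simp j_def nth_append)
      have "EE (Suc 4) S"
      proof (rule E_Q2a[OF sa' L0(2)])
        show "adm (L (P ! a) ! j)" using admLa[OF L0(2)] .
        let ?S1 = "S \<union> {(L (P ! a) ! j, False)}"
        show "EE 4 ?S1"
        proof (rule prem[of "(\<phi> # Gs, Ds)" ps a])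
          show "\<forall>e\<in>set (L (\<phi> # Gs, Ds)). e \<in> set (L (P ! a)) \<or> \<not> cs (?S1 \<union> {(e, True)})"
          proof
            fix e assume "e \<in> set (L (\<phi> # Gs, Ds))"
            then have "e = Neg \<phi> \<or> e \<in> set (L (P ! a))" using negR by (auto simp: L_simp)
            then show "e \<in> set (L (P ! a)) \<or> \<not> cs (?S1 \<union> {(e, True)})"
              using L0 cons_TF[of "Neg \<phi>" "?S1 \<union> {(e, True)}"] by auto
          qed
        qed (use negR sub aN Ca sa in auto)
      qed
      then show ?thesis by (rule Emono) auto
    next
      case (disjL Gs Ds \<phi>s)
      have L0: "L (P ! a) ! 0 = Neg (Disj \<phi>s)" "0 < length (L (P ! a))" using disjL by (auto simp: L_simp)
      have a0: "adm (Neg (Disj \<phi>s))" using admLa[OF L0(2)] L0(1) by simp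
      have "EE (Suc (Suc (Suc 4))) S"
      proof (rule E_Q2a[OF sa' L0(2)])
        show "adm (L (P ! a) ! 0)" using admLa[OF L0(2)] .
        let ?S1 = "S \<union> {(L (P ! a) ! 0, False)}"
        show "EE (Suc (Suc 4)) ?S1"
        proof (rule E_Q1[where \<phi>="Disj \<phi>s"])
          show "adm (Disj \<phi>s)" using adm_Neg a0 by blast
          fix b assume c: "cs (?S1 \<union> {(Disj \<phi>s, b)})"
          have b: b
          proof (rule ccontr)
            assume "\<not> b"
            then show False using c cons_neg[of "Disj \<phi>s" False "?S1 \<union> {(Disj \<phi>s, b)}"] L0 by auto
          qed
          let ?S2 = "?S1 \<union> {(Disj \<phi>s, b)}"
          show "EE (Suc 4) ?S2"
          proof (rule E_Q2b[where \<phi>s="\<phi>s"])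
            show "(Disj \<phi>s, True) \<in> ?S2" using b by simp
            fix j assume j: "j < length \<phi>s"
            let ?S3 = "?S2 \<union> {(\<phi>s ! j, True)}"
            show "EE 4 ?S3"
            proof (rule prem[of "(\<phi>s ! j # Gs, Ds)" ps a])
              show "(\<phi>s ! j # Gs, Ds) \<in> set ps" using disjL j by auto
              show "\<forall>e\<in>set (L (\<phi>s ! j # Gs, Ds)). e \<in> set (L (P ! a)) \<or> \<not> cs (?S3 \<union> {(e, True)})"
              proof
                fix e assume "e \<in> set (L (\<phi>s ! j # Gs, Ds))"
                then have "e = Neg (\<phi>s ! j) \<or> e \<in> set (L (P ! a))" using disjL by (auto simp: L_simp)
                then show "e \<in> set (L (P ! a)) \<or> \<not> cs (?S3 \<union> {(e, True)})"
                  using cons_neg[of "\<phi>s ! j" True "?S3 \<union> {(e, True)}"] by auto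
              qed
            qed (use disjL sub aN Ca sa in auto)
          qed
        qed
      qed
      then show ?thesis by (rule Emono) auto
    next
      case (disjR \<phi> \<phi>s Gs Ds)
      define j where "j = length Gs + length Ds"
      have L0: "L (P ! a) ! j = Disj \<phi>s" "j < length (L (P ! a))" using disjR
        by (auto simp: L_simp j_def nth_append)
      have a0: "adm (Disj \<phi>s)" using admLa[OF L0(2)] L0(1) by simp
      obtain k where k: "k < length \<phi>s" "\<phi>s ! k = \<phi>" using disjR(3) by (auto simp: in_set_conv_nth)
      have "EE (Suc (Suc 4)) S"
      proof (rule E_Q2a[OF sa' L0(2)])
        show "adm (L (P ! a) ! j)" using admLa[OF L0(2)] .
        let ?S1 = "S \<union> {(L (P ! a) ! j, False)}"
        show "EE (Suc 4) ?S1"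
        proof (rule E_Q2a[where \<phi>s=\<phi>s and j=k])
          show "(Disj \<phi>s, False) \<in> ?S1" using L0 by simp
          show "k < length \<phi>s" by fact
          show "adm (\<phi>s ! k)" using adm_Disj_nth a0 k(1) by blast
          let ?S2 = "?S1 \<union> {(\<phi>s ! k, False)}"
          show "EE 4 ?S2"
          proof (rule prem[of "(Gs, Ds @ [\<phi>])" ps a])
            show "\<forall>e\<in>set (L (Gs, Ds @ [\<phi>])). e \<in> set (L (P ! a)) \<or> \<not> cs (?S2 \<union> {(e, True)})"
            proof
              fix e assume "e \<in> set (L (Gs, Ds @ [\<phi>]))"
              then have "e = \<phi> \<or> e \<in> set (L (P ! a))" using disjR by (auto simp: L_simp)
              then show "e \<in> set (L (P ! a)) \<or> \<not> cs (?S2 \<union> {(e, True)})"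
                using k cons_TF[of \<phi> "?S2 \<union> {(e, True)}"] by auto
            qed
          qed (use disjR sub aN Ca sa in auto)
        qed
      qed
      then show ?thesis by (rule Emono) auto
    qed
  qed
qed

end


context G begin

lemma finStep:
  assumes aN: "a + 1 \<le> length P" and Ca: "(C P a, False) \<in> S" and Cb: "(C P (a + 1), True) \<in> S"
  shows "EE 9 S"
proof -
  have "EE (Suc 8) S"
  proof (rule E_Q2b[where \<phi>s="map (\<lambda>i. Neg (sf (P ! i))) [0..<a+1]"])
    show "(Disj (map (\<lambda>i. Neg (sf (P ! i))) [0..<a + 1]), True) \<in> S" using Cb unfolding C_def .
    fix j assume j: "j < length (map (\<lambda>i. Neg (sf (P ! i))) [0..<a + 1])"
    then have ja: "j \<le> a" by simp
    have ej: "map (\<lambda>i. Neg (sf (P ! i))) [0..<a + 1] ! j = Neg (sf (P ! j))" using ja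
      by (simp del: upt_Suc)
    let ?S1 = "S \<union> {(Neg (sf (P ! j)), True)}"
    show "EE 8 (S \<union> {(map (\<lambda>i. Neg (sf (P ! i))) [0..<a + 1] ! j, True)})" unfolding ej
    proof (cases "j < a")
      case True
      have "EE (Suc 0) ?S1"
      proof (rule E_Q2a[where \<phi>s="map (\<lambda>i. Neg (sf (P ! i))) [0..<a]" and j=j])
        show "(Disj (map (\<lambda>i. Neg (sf (P ! i))) [0..<a]), False) \<in> ?S1" using Ca unfolding C_def by simp
        show "j < length (map (\<lambda>i. Neg (sf (P ! i))) [0..<a])" using True by simp
        show "adm (map (\<lambda>i. Neg (sf (P ! i))) [0..<a] ! j)" using True aN adm_nsf by simp
        assume c: "cs (?S1 \<union> {(map (\<lambda>i. Neg (sf (P ! i))) [0..<a] ! j, False)})"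
        have e: "map (\<lambda>i. Neg (sf (P ! i))) [0..<a] ! j = Neg (sf (P ! j))" using True by simp
        have "\<not> cs (?S1 \<union> {(map (\<lambda>i. Neg (sf (P ! i))) [0..<a] ! j, False)})"
          unfolding e by (intro cons_TF[of "Neg (sf (P ! j))"]) auto
        then show "EE 0 (?S1 \<union> {(map (\<lambda>i. Neg (sf (P ! i))) [0..<a] ! j, False)})" using c by blast
      qed
      then show "EE 8 ?S1" by (rule Emono) auto
    next
      case False
      then have jeq: "j = a" using ja by simp
      have "EE (Suc 7) ?S1"
      proof (rule E_Q1[where \<phi>="sf (P ! a)"])
        show "adm (sf (P ! a))" using adm_sf aN by simp
        fix b assume c: "cs (?S1 \<union> {(sf (P ! a), b)})"
        have b: "\<not> b"
        proof
          assume b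
          then show False using c cons_neg[of "sf (P ! a)" True "?S1 \<union> {(sf (P ! a), b)}"] jeq by auto
        qed
        show "EE 7 (?S1 \<union> {(sf (P ! a), b)})"
          by (rule ruleStep[of a]) (use aN Ca b in auto)
      qed
      then show "EE 8 ?S1" by (rule Emono) auto
    qed
  qed
  then show ?thesis by simp
qed

lemma bs:
  "\<And>a b S. a < b \<Longrightarrow> b \<le> length P \<Longrightarrow> b - a \<le> 2 ^ r \<Longrightarrow> (C P a, False) \<in> S \<Longrightarrow> (C P b, True) \<in> S
   \<Longrightarrow> EE (r + 9) S"
proof (induction r)
  case 0
  then have "b = a + 1" by simp
  then show ?case using finStep 0 by simp
next
  case (Suc r a b S)
  show ?case
  proof (cases "b - a \<le> 2 ^ r")
    case True
    then have "EE (r + 9) S" using Suc by blast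
    then show ?thesis by (rule Emono) auto
  next
    case False
    define m where "m = (a + b) div 2"
    have m: "a < m" "m < b" "m - a \<le> 2 ^ r" "b - m \<le> 2 ^ r" using False Suc.prems(1,3) unfolding m_def
      by auto
    have "EE (Suc (r + 9)) S"
    proof (rule E_Q1[where \<phi>="C P m"])
      show "adm (C P m)" using admC m Suc.prems(2) by simp
      fix bb assume "cs (S \<union> {(C P m, bb)})"
      show "EE (r + 9) (S \<union> {(C P m, bb)})"
      proof (cases bb)
        case True
        then show ?thesis using Suc.IH[of a m "S \<union> {(C P m, bb)}"] m Suc.prems by auto
      next
        case False
        then show ?thesis using Suc.IH[of m b "S \<union> {(C P m, bb)}"] m Suc.prems by auto
      qed
    qed
    then show ?thesis by simp
  qed
qed

lemma start:
  assumes "length P \<le> 2 ^ r"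
  shows "EE (r + 11) {}"
proof -
  let ?N = "length P"
  have N0: "0 < ?N" using ne by simp
  have C0: "C P 0 = Disj []" by (simp add: C_def)
  have lastsf: "sf (P ! (?N - 1)) = Disj []" using lastP ne by (simp add: last_conv_nth sf_def L_def)
  have "EE (Suc (Suc (r + 9))) {}"
  proof (rule E_Q1[where \<phi>="C P 0"])
    show "adm (C P 0)" using admC by simp
    fix b assume "cs ({} \<union> {(C P 0, b)})"
    show "EE (Suc (r + 9)) ({} \<union> {(C P 0, b)})"
    proof (cases b)
      case True
      have "EE (Suc 0) ({} \<union> {(C P 0, b)})"
        by (rule E_Q2b[where \<phi>s="[]"]) (use True C0 in auto)
      then show ?thesis by (rule Emono) auto
    next
      case False
      let ?S1 = "{} \<union> {(C P 0, b)}"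
      show ?thesis
      proof (rule E_Q1[where \<phi>="C P ?N"])
        show "adm (C P ?N)" using admC by simp
        fix b2 assume "cs (?S1 \<union> {(C P ?N, b2)})"
        show "EE (r + 9) (?S1 \<union> {(C P ?N, b2)})"
        proof (cases b2)
          case True
          then show ?thesis using bs[where a=0 and b="?N" and S="?S1 \<union> {(C P ?N, b2)}" and r=r] N0 assms False by auto
        next
          case F2: False
          let ?S2 = "?S1 \<union> {(C P ?N, b2)}"
          have "EE (Suc (Suc (Suc 0))) ?S2"
          proof (rule E_Q2a[where \<phi>s="map (\<lambda>i. Neg (sf (P ! i))) [0..<?N]" and j="?N - 1"])
            show "(Disj (map (\<lambda>i. Neg (sf (P ! i))) [0..<?N]), False) \<in> ?S2" using F2 by (simp add: C_def)
            show "?N - 1 < length (map (\<lambda>i. Neg (sf (P ! i))) [0..<?N])" using N0 by simp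
            show "adm (map (\<lambda>i. Neg (sf (P ! i))) [0..<?N] ! (?N - 1))" using N0 adm_nsf by simp
            let ?S3 = "?S2 \<union> {(map (\<lambda>i. Neg (sf (P ! i))) [0..<?N] ! (?N - 1), False)}"
            have S3: "(Neg (Disj []), False) \<in> ?S3" using N0 lastsf by simp
            show "EE (Suc (Suc 0)) ?S3"
            proof (rule E_Q1[where \<phi>="Disj []"])
              show "adm (Disj [])" using adm_sf[of "?N - 1"] N0 lastsf by simp
              fix b3 assume c: "cs (?S3 \<union> {(Disj [], b3)})"
              have b3
              proof (rule ccontr)
                assume "\<not> b3"
                then show False using c S3 cons_neg[of "Disj []" False "?S3 \<union> {(Disj [], b3)}"] by auto
              qed
              show "EE (Suc 0) (?S3 \<union> {(Disj [], b3)})"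
                by (rule E_Q2b[where \<phi>s="[]"]) (use \<open>b3\<close> in auto)
            qed
          qed
          then show ?thesis by (rule Emono) auto
        qed
      qed
    qed
  qed
  then show ?thesis by (simp add: eval_nat_numeral)
qed

end


lemma fsize_pos: "fsize f \<ge> 1" by (cases f) auto

lemma size_sf: "fsize (sf S) \<le> 2 * seq_size S"
proof -
  obtain Gs Ds where S: "S = (Gs, Ds)" by (cases S)
  have "sum_list (map (\<lambda>f. 1 + fsize f) Gs) \<le> sum_list (map (\<lambda>f. 2 * fsize f) Gs)"
    using fsize_pos by (intro sum_list_mono) (simp add: fsize_pos)
  also have "\<dots> = 2 * sum_list (map fsize Gs)" by (simp add: sum_list_const_mult)
  finally have "sum_list (map (\<lambda>f. 1 + fsize f) Gs) \<le> 2 * sum_list (map fsize Gs)" .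
  then show ?thesis unfolding S sf_def L_def seq_size_def by (simp add: comp_def)
qed

lemma seq_size_pos: "seq_size S \<ge> 1" by (simp add: seq_size_def)

lemma size_C:
  assumes "m \<le> length P"
  shows "fsize (C P m) \<le> 1 + 3 * proof_size P"
proof -
  have "fsize (C P m) = 1 + sum_list (map (\<lambda>i. 1 + fsize (sf (P ! i))) [0..<m])"
    by (simp add: C_def comp_def)
  also have "sum_list (map (\<lambda>i. 1 + fsize (sf (P ! i))) [0..<m]) = (\<Sum>i\<in>{0..<m}. 1 + fsize (sf (P ! i)))"
    unfolding atLeastLessThan_upt by (rule sum_set_upt_conv_sum_list_nat[symmetric])
  also have "\<dots> \<le> (\<Sum>i\<in>{0..<m}. 3 * seq_size (P ! i))"
  proof (intro sum_mono)
    fix i show "1 + fsize (sf (P ! i)) \<le> 3 * seq_size (P ! i)"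
      using size_sf[of "P ! i"] seq_size_pos[of "P ! i"] by linarith
  qed
  also have "\<dots> \<le> (\<Sum>i\<in>{0..<length P}. 3 * seq_size (P ! i))"
    using assms by (intro sum_mono2) auto
  also have "\<dots> = 3 * proof_size P"
    by (simp add: proof_size_def sum_list_sum_nth sum_distrib_left)
  finally show ?thesis by simp
qed

lemma len_le_size: "length P \<le> proof_size P"
  by (induction P) (auto simp: proof_size_def seq_size_def)

lemma sf_props:
  assumes "\<forall>\<phi>\<in>seq_fms S. wf p \<phi> \<and> depth \<phi> \<le> d \<and> fvars \<phi> \<subseteq> V"
  shows "wf p (sf S) \<and> depth (sf S) \<le> d + 2 \<and> fvars (sf S) \<subseteq> V"
proof -
  obtain Gs Ds where S: "S = (Gs, Ds)" by (cases S)
  have "\<forall>f\<in>set (L S). depth f \<le> d + 1"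
  proof
    fix f assume "f \<in> set (L S)"
    then have "(\<exists>g\<in>set Gs. f = Neg g) \<or> f \<in> set Ds" unfolding S L_def by auto
    then show "depth f \<le> d + 1"
    proof
      assume "\<exists>g\<in>set Gs. f = Neg g"
      then obtain g where g: "g \<in> set Gs" "f = Neg g" by blast
      have "depth g \<le> d" using assms g(1) unfolding S seq_fms_def by auto
      then show ?thesis using depth_Neg_le[of g] g(2) by simp
    next
      assume "f \<in> set Ds" then have "depth f \<le> d" using assms unfolding S seq_fms_def by auto
      then show ?thesis by simp
    qed
  qed
  then have "depth (sf S) \<le> Suc (d + 1)" unfolding sf_def by (rule depth_Disj_le)
  moreover have "wf p (sf S)" "fvars (sf S) \<subseteq> V" using assms unfolding S sf_def L_def seq_fms_def by auto
  ultimately show ?thesis by simp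
qed

lemma C_props:
  assumes "\<forall>S\<in>set P. \<forall>\<phi>\<in>seq_fms S. wf p \<phi> \<and> depth \<phi> \<le> d \<and> fvars \<phi> \<subseteq> V" "m \<le> length P"
  shows "wf p (C P m) \<and> depth (C P m) \<le> d + 4 \<and> fvars (C P m) \<subseteq> V"
proof -
  have sfp: "wf p (sf (P ! i)) \<and> depth (sf (P ! i)) \<le> d + 2 \<and> fvars (sf (P ! i)) \<subseteq> V" if "i < m" for i
  proof -
    have "P ! i \<in> set P" using that assms(2) by simp
    then show ?thesis using assms(1) by (intro sf_props) blast
  qed
  have "\<forall>f\<in>set (map (\<lambda>i. Neg (sf (P ! i))) [0..<m]). depth f \<le> d + 3"
  proof
    fix f assume "f \<in> set (map (\<lambda>i. Neg (sf (P ! i))) [0..<m])"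
    then obtain i where "i < m" "f = Neg (sf (P ! i))" by auto
    then show "depth f \<le> d + 3" using sfp[of i] depth_Neg_le[of "sf (P ! i)"] by simp
  qed
  then have "depth (C P m) \<le> Suc (d + 3)" unfolding C_def by (rule depth_Disj_le)
  moreover have "wf p (C P m)" using sfp unfolding C_def by auto
  moreover have "fvars (C P m) \<subseteq> V" using sfp unfolding C_def by fastforce
  ultimately show ?thesis by simp
qed

lemma no_empty_rule: "\<not> lk_rule [] ([], [])"
  by (auto elim: lk_rule.cases)

lemma ss_seq_size: "seq_size (ss V S) = seq_size S"
  by (simp add: ss_def seq_size_def comp_def sv_fsize)

lemma ss_proof_size: "proof_size (map (ss V) P) = proof_size P"
  by (simp add: proof_size_def comp_def ss_seq_size)

lemma ss_seq_fms: "seq_fms (ss V S) = sv V ` seq_fms S"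
  by (auto simp: ss_def seq_fms_def)

lemma ss_initial:
  assumes "initial_seq p (negPHP n) S"
  shows "initial_seq p (negPHP n) (ss (php_vars n) S)"
  using assms unfolding initial_seq_def
proof (elim disjE exE bexE conjE)
  fix \<phi> assume "S = ([\<phi>], [\<phi>])"
  then show "(\<exists>\<phi>. ss (php_vars n) S = ([\<phi>], [\<phi>])) \<or> (\<exists>\<psi>. mod_axiom p \<psi> \<and> ss (php_vars n) S = ([], [\<psi>])) \<or>
    (\<exists>\<psi>\<in>negPHP n. ss (php_vars n) S = ([], [\<psi>]))" by (simp add: ss_def)
next
  fix \<psi> assume "mod_axiom p \<psi>" "S = ([], [\<psi>])"
  then show "(\<exists>\<phi>. ss (php_vars n) S = ([\<phi>], [\<phi>])) \<or> (\<exists>\<psi>. mod_axiom p \<psi> \<and> ss (php_vars n) S = ([], [\<psi>])) \<or>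
    (\<exists>\<psi>\<in>negPHP n. ss (php_vars n) S = ([], [\<psi>]))" using sv_mod_axiom by (simp add: ss_def)
next
  fix \<psi> assume a: "\<psi> \<in> negPHP n" "S = ([], [\<psi>])"
  then have "sv (php_vars n) \<psi> = \<psi>" using sv_id negPHP_fvars by blast
  then show "(\<exists>\<phi>. ss (php_vars n) S = ([\<phi>], [\<phi>])) \<or> (\<exists>\<psi>. mod_axiom p \<psi> \<and> ss (php_vars n) S = ([], [\<psi>])) \<or>
    (\<exists>\<psi>\<in>negPHP n. ss (php_vars n) S = ([], [\<psi>]))" using a by (simp add: ss_def)
qed

lemma size_ge2:
  assumes "lk_refutation p d \<Sigma> P"
  shows "proof_size P \<ge> 2"
proof (rule ccontr)
  assume "\<not> proof_size P \<ge> 2"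
  then have "length P \<le> 1" using len_le_size[of P] by simp
  moreover have ne: "P \<noteq> []" and l: "last P = ([], [])" using assms unfolding lk_refutation_def by auto
  ultimately obtain x where P: "P = [x]" by (cases P) auto
  then have x: "x = ([], [])" using l by simp
  have "initial_seq p \<Sigma> (P ! 0) \<or> (\<exists>ps. set ps \<subseteq> set (take 0 P) \<and> lk_rule ps (P ! 0))"
    using assms unfolding lk_refutation_def P by auto
  then show False using no_empty_rule unfolding P x by (auto simp: initial_seq_def)
qed

theorem main:
  assumes "n \<ge> 1" "lk_refutation p d (negPHP n) P" "proof_size P = s"
  shows "prover_wins p (d + 4) n (nat \<lceil>12 * log 2 (real s)\<rceil>)"
proof -
  define V where "V = php_vars n"
  define P' where "P' = map (ss V) P"
  define t where "t = nat \<lceil>12 * log 2 (real s)\<rceil>"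
  define r where "r = nat \<lceil>log 2 (real s)\<rceil>"
  have s2: "s \<ge> 2" using size_ge2[OF assms(2)] assms(3) by simp
  have lg: "log 2 (real s) \<ge> 1" using s2 by simp
  have rs: "real s \<le> 2 ^ r" unfolding r_def using s2 by (smt (verit, best) power_of_nat_log_ge)
  have rt: "r + 11 \<le> t" unfolding r_def t_def using lg by linarith
  have V11: "(1, 1) \<in> V" using assms(1) by (simp add: V_def php_vars_def)
  have ps: "proof_size P' = s" using assms(3) by (simp add: P'_def ss_proof_size)
  have "real s \<le> real (2 ^ r)" using rs by simp
  then have sr: "s \<le> 2 ^ r" by (simp only: of_nat_le_iff)
  have lenP: "length P' \<le> 2 ^ r"
    using len_le_size[of P'] ps sr by simp
  have r1: "P \<noteq> []" "last P = ([], [])"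
    and r2: "\<forall>k<length P. \<forall>\<phi>\<in>seq_fms (P ! k). wf p \<phi> \<and> depth \<phi> \<le> d"
    and r3: "\<forall>k<length P. initial_seq p (negPHP n) (P ! k) \<or> (\<exists>ps. set ps \<subseteq> set (take k P) \<and> lk_rule ps (P ! k))"
    using assms(2) unfolding lk_refutation_def by auto
  have good: "\<forall>S\<in>set P'. \<forall>\<phi>\<in>seq_fms S. wf p \<phi> \<and> depth \<phi> \<le> d \<and> fvars \<phi> \<subseteq> V"
  proof (intro ballI)
    fix S \<phi> assume S: "S \<in> set P'" and \<phi>: "\<phi> \<in> seq_fms S"
    then obtain k where k: "k < length P" "S = ss V (P ! k)" unfolding P'_def by (auto simp: in_set_conv_nth)
    then obtain \<psi> where \<psi>: "\<psi> \<in> seq_fms (P ! k)" "\<phi> = sv V \<psi>" using \<phi> ss_seq_fms by auto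
    show "wf p \<phi> \<and> depth \<phi> \<le> d \<and> fvars \<phi> \<subseteq> V"
      using r2 k \<psi> sv_wf sv_depth sv_fvars[of V \<psi>] V11 by auto
  qed
  have 2: "1 + 3 * s \<le> 2 ^ t"
  proof -
    have "1 + 3 * s \<le> 2 ^ 11 * 2 ^ r" using sr s2 by simp
    also have "\<dots> = 2 ^ (r + 11)" by (simp add: power_add)
    also have "\<dots> \<le> 2 ^ t" using rt by (intro power_increasing) auto
    finally show ?thesis .
  qed
  interpret G p "d + 4" n t P'
  proof
    show "P' \<noteq> []" using r1 by (simp add: P'_def)
    show "last P' = ([], [])" using r1 by (simp add: P'_def last_map ss_def)
    fix k assume k: "k < length P'"
    then have kP: "k < length P" by (simp add: P'_def)
    from r3 kP show "initial_seq p (negPHP n) (P' ! k) \<or> (\<exists>ps. set ps \<subseteq> set (take k P') \<and> lk_rule ps (P' ! k))"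
    proof (elim allE impE disjE exE conjE)
      assume "initial_seq p (negPHP n) (P ! k)"
      then show ?thesis using ss_initial kP by (simp add: P'_def V_def)
    next
      fix ps assume "set ps \<subseteq> set (take k P)" "lk_rule ps (P ! k)"
      then have "set (map (ss V) ps) \<subseteq> set (take k P')" "lk_rule (map (ss V) ps) (P' ! k)"
        using ss_rule kP by (auto simp: P'_def take_map)
      then show ?thesis by blast
    qed (use kP in auto)
  next
    fix m assume m: "m \<le> length P'"
    show "admissible p (d + 4) n t (C P' m)"
      using C_props[OF good m] size_C[OF m] ps 2 unfolding admissible_def V_def by auto
  qed
  have "E p (d + 4) n t (r + 11) {}" using start lenP by blast
  then have "E p (d + 4) n t t {}" by (rule E_mono) (use rt in auto)
  then show ?thesis using E_wins t_def by blast
qed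


theorem lemma2p1:
  fixes p :: nat
  assumes "prime p"
  shows "\<exists>(c::nat) (c'::real). c > 0 \<and> c' > 0 \<and>
    (\<forall>d n s P. d \<ge> 2 \<longrightarrow> n \<ge> 1 \<longrightarrow> s \<ge> 1 \<longrightarrow>
       lk_refutation p d (negPHP n) P \<longrightarrow> proof_size P = s \<longrightarrow>
       prover_wins p (d + c) n (nat \<lceil>c' * log 2 (real s)\<rceil>))"
proof (rule exI[of _ 4], rule exI[of _ 12], intro conjI allI impI)
  show "(0::nat) < 4" by simp
  show "(0::real) < 12" by simp
  fix d n s P
  assume "n \<ge> 1" "lk_refutation p d (negPHP n) P" "proof_size P = s"
  then show "prover_wins p (d + 4) n (nat \<lceil>12 * log 2 (real s)\<rceil>)" by (rule main)
qed

end
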